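(* Fix an instance of the data in the context and a cycle basis of the network graph $(\mathcal B,\mathcal L)$. For each cycle $C$ of the basis, with buses labeled $1,\dots,n$ in cyclic order ($n=|C|$) and oriented edges $(1,2),\dots,(n-1,n),(n,1)$, impose: (i) if $n=3$: $s_{12}c_{33}+c_{23}s_{31}+s_{23}c_{31}=0$ and $c_{12}c_{33}-c_{23}c_{31}+s_{23}s_{31}=0$; (ii) if $n\ge4$: introduce auxiliary real variables $\tilde c_{1,i},\tilde s_{1,i}$ for $i=3,\dots,n-1$, set $\tilde c_{12}=c_{12}$, $\tilde s_{12}=s_{12}$, $\tilde c_{1n}=c_{1n}$, $\tilde s_{1n}=s_{1n}$, and impose for $i=2,\dots,n-1$: $\tilde s_{1,i}c_{i+1,i+1}+s_{i,i+1}\tilde c_{1,i+1}-\tilde s_{1,i+1}c_{i,i+1}=0$ and $\tilde c_{1,i}c_{i+1,i+1}-c_{i,i+1}\tilde c_{1,i+1}-\tilde s_{1,i+1}s_{i,i+1}=0$; for $i=2,\dots,n-1$: $\tilde c_{1,i}^2+\tilde s_{1,i}^2=c_{11}c_{ii}$; and $c_{ij}^2+s_{ij}^2=c_{ii}c_{jj}$ for every edge $(i,j)$ of $C$. Then: (a) (validity) for every feasible point $(p^g,q^g,c,s,\theta)$ of the OPF formulation in the context, there exist values of the auxiliary variables such that all the constraints (i)–(ii) hold for every cycle of the basis; and (b) every $(p^g,q^g,c,s)$ satisfying (ALT), the coupling equalities $c_{ij}^2+s_{ij}^2=c_{ii}c_{jj}$ for all lines, and constraints (i)–(ii) (for some values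 of the auxiliary variables) satisfies, for each cycle $C$ in the basis, $\sum_{(i,j)\in C}\operatorname{atan2}(s_{ij},c_{ij})=2\pi k$ for some integer $k$ (sum over the oriented edges of $C$).
   Context: Data: finite bus set $\mathcal B$, line set $\mathcal L$ (unordered pairs of distinct buses; variables $c_{ij},s_{ij}$ for both orientations of each line), $\delta(i)$ the neighbors of $i$, generator set $\mathcal G\subseteq\mathcal B$, reals $G_{ij},B_{ij}$ (lines), $G_{ii},B_{ii}$ (buses), demands $p_i^d,q_i^d$, voltage bounds $0<\underline V_i\le\overline V_i$, generator bounds $p_i^{\min}\le p_i^{\max}$, $q_i^{\min}\le q_i^{\max}$ ($i\in\mathcal G$). Variables $p_i^g,q_i^g$ for $i\in\mathcal G$, with $p_i^g=q_i^g=0$ for $i\notin\mathcal G$. (ALT): $p_i^g-p_i^d=G_{ii}c_{ii}+\sum_{j\in\delta(i)}(G_{ij}c_{ij}-B_{ij}s_{ij})$, $q_i^g-q_i^d=-B_{ii}c_{ii}+\sum_{j\in\delta(i)}(-B_{ij}c_{ij}-G_{ij}s_{ij})$, $\underline V_i^2\le c_{ii}\le\overline V_i^2$ ($i\in\mathcal B$); $c_{ij}=c_{ji}$, $s_{ij}=-s_{ji}$ (lines); $p_i^{\min}\le p_i^g\le p_i^{\max}$, $q_i^{\min}\le q_i^g\le q_i^{\max}$ ($i\in\mathcal G$). OPF formulation: variables $(p^g,q^g,c,s,\theta)$ with $\theta\in\mathbb R^{\mathcal B}$ satisfying (ALT), $c_{ij}^2+s_{ij}^2=c_{ii}c_{jj}$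 and $\theta_j-\theta_i=\operatorname{atan2}(s_{ij},c_{ij})$ for every line $(i,j)$ (one fixed orientation per line suffices by symmetry). Here $\operatorname{atan2}(y,x)\in(-\pi,\pi]$ is the angle of the point $(x,y)\neq(0,0)$. A cycle basis is a basis of the cycle space of the graph consisting of cycles. *)

theory Defs
  imports "HOL-Analysis.Analysis"
begin

text \<open>atan2(y,x): the angle in (-pi,pi] of the point (x,y); Arg is the principal argument.\<close>
definition atan2 :: "real \<Rightarrow> real \<Rightarrow> real" where
  "atan2 y x = Arg (Complex x y)"

record 'b network =
  buses :: "'b set"
  lines :: "'b set set"
  gens  :: "'b set"
  Gc    :: "'b \<Rightarrow> 'b \<Rightarrow> real"
  Bc    :: "'b \<Rightarrow> 'b \<Rightarrow> real"
  pd    :: "'b \<Rightarrow> real"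
  qd    :: "'b \<Rightarrow> real"
  Vmin  :: "'b \<Rightarrow> real"
  Vmax  :: "'b \<Rightarrow> real"
  pmin  :: "'b \<Rightarrow> real"
  pmax  :: "'b \<Rightarrow> real"
  qmin  :: "'b \<Rightarrow> real"
  qmax  :: "'b \<Rightarrow> real"

definition wf_network :: "'b network \<Rightarrow> bool" where
  "wf_network N \<longleftrightarrow>
     finite (buses N) \<and>
     (\<forall>e\<in>lines N. \<exists>i j. e = {i, j} \<and> i \<in> buses N \<and> j \<in> buses N \<and> i \<noteq> j) \<and>
     gens N \<subseteq> buses N \<and>
     (\<forall>i\<in>buses N. 0 < Vmin N i \<and> Vmin N i \<le> Vmax N i) \<and>
     (\<forall>i\<in>gens N. pmin N i \<le> pmax N i \<and> qmin N i \<le> qmax N i)"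

definition nbrs :: "'b network \<Rightarrow> 'b \<Rightarrow> 'b set" where
  "nbrs N i = {j. {i, j} \<in> lines N}"

definition ALT :: "'b network \<Rightarrow> ('b \<Rightarrow> real) \<Rightarrow> ('b \<Rightarrow> real)
     \<Rightarrow> ('b \<Rightarrow> 'b \<Rightarrow> real) \<Rightarrow> ('b \<Rightarrow> 'b \<Rightarrow> real) \<Rightarrow> bool" where
  "ALT N pg qg c s \<longleftrightarrow>
     (\<forall>i\<in>buses N.
        pg i - pd N i = Gc N i i * c i i
                        + (\<Sum>j\<in>nbrs N i. Gc N i j * c i j - Bc N i j * s i j) \<and>
        qg i - qd N i = - Bc N i i * c i i
                        + (\<Sum>j\<in>nbrs N i. - Bc N i j * c i j - Gc N i j * s i j) \<and>
        (Vmin N i)\<^sup>2 \<le> c i i \<and> c i i \<le> (Vmax N i)\<^sup>2) \<and>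
     (\<forall>i j. {i, j} \<in> lines N \<longrightarrow> c i j = c j i \<and> s i j = - s j i) \<and>
     (\<forall>i\<in>gens N. pmin N i \<le> pg i \<and> pg i \<le> pmax N i \<and> qmin N i \<le> qg i \<and> qg i \<le> qmax N i) \<and>
     (\<forall>i\<in>buses N - gens N. pg i = 0 \<and> qg i = 0)"

definition coupling :: "'b network \<Rightarrow> ('b \<Rightarrow> 'b \<Rightarrow> real) \<Rightarrow> ('b \<Rightarrow> 'b \<Rightarrow> real) \<Rightarrow> bool" where
  "coupling N c s \<longleftrightarrow>
     (\<forall>i j. {i, j} \<in> lines N \<longrightarrow> (c i j)\<^sup>2 + (s i j)\<^sup>2 = c i i * c j j)"

definition orientation :: "'b network \<Rightarrow> ('b \<times> 'b) set \<Rightarrow> bool" where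
  "orientation N Or \<longleftrightarrow>
     (\<forall>(i, j)\<in>Or. {i, j} \<in> lines N) \<and>
     (\<forall>i j. {i, j} \<in> lines N \<longrightarrow> ((i, j) \<in> Or \<longleftrightarrow> (j, i) \<notin> Or))"

definition OPF_feasible :: "'b network \<Rightarrow> ('b \<times> 'b) set \<Rightarrow> ('b \<Rightarrow> real) \<Rightarrow> ('b \<Rightarrow> real)
     \<Rightarrow> ('b \<Rightarrow> 'b \<Rightarrow> real) \<Rightarrow> ('b \<Rightarrow> 'b \<Rightarrow> real) \<Rightarrow> ('b \<Rightarrow> real) \<Rightarrow> bool" where
  "OPF_feasible N Or pg qg c s \<theta> \<longleftrightarrow>
     ALT N pg qg c s \<and> coupling N c s \<and>
     (\<forall>(i, j)\<in>Or. \<theta> j - \<theta> i = atan2 (s i j) (c i j))"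

text \<open>Cycles, given as vertex lists in cyclic order (the list fixes the labeling 1..n
  and the orientation (1,2),...,(n-1,n),(n,1)).\<close>
definition succ_idx :: "nat \<Rightarrow> nat \<Rightarrow> nat" where
  "succ_idx n k = (Suc k) mod n"

definition is_cycle :: "'b network \<Rightarrow> 'b list \<Rightarrow> bool" where
  "is_cycle N C \<longleftrightarrow> distinct C \<and> 3 \<le> length C \<and> set C \<subseteq> buses N \<and>
     (\<forall>k<length C. {C ! k, C ! succ_idx (length C) k} \<in> lines N)"

definition cyc_edges :: "'b list \<Rightarrow> 'b set set" where
  "cyc_edges C = {{C ! k, C ! succ_idx (length C) k} | k. k < length C}"

text \<open>Cycle space over GF(2): edge sets in which every bus has even degree.\<close>
definition cycle_space :: "'b network \<Rightarrow> 'b set set set" where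
  "cycle_space N = {F. F \<subseteq> lines N \<and> (\<forall>v\<in>buses N. even (card {e\<in>F. v \<in> e}))}"

text \<open>GF(2)-sum (iterated symmetric difference) of the edge sets of a family of cycles.\<close>
definition xor_sum :: "'b list set \<Rightarrow> 'b set set" where
  "xor_sum S = {e. odd (card {C\<in>S. e \<in> cyc_edges C})}"

definition cycle_basis :: "'b network \<Rightarrow> 'b list set \<Rightarrow> bool" where
  "cycle_basis N \<C> \<longleftrightarrow> finite \<C> \<and> (\<forall>C\<in>\<C>. is_cycle N C) \<and>
     inj_on xor_sum (Pow \<C>) \<and> xor_sum ` Pow \<C> = cycle_space N"

text \<open>Constraints (i)/(ii) for a cycle C with auxiliary variables ct, st (indices 1-based:
  bus i of the cycle is C ! (i-1)).\<close>
definition cycle_constr :: "('b \<Rightarrow> 'b \<Rightarrow> real) \<Rightarrow> ('b \<Rightarrow> 'b \<Rightarrow> real) \<Rightarrow> 'b list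
     \<Rightarrow> (nat \<Rightarrow> real) \<Rightarrow> (nat \<Rightarrow> real) \<Rightarrow> bool" where
  "cycle_constr c s C ct st \<longleftrightarrow>
    (let n = length C; v = (\<lambda>i. C ! (i - 1)) in
     (n = 3 \<longrightarrow>
        s (v 1) (v 2) * c (v 3) (v 3) + c (v 2) (v 3) * s (v 3) (v 1)
          + s (v 2) (v 3) * c (v 3) (v 1) = 0 \<and>
        c (v 1) (v 2) * c (v 3) (v 3) - c (v 2) (v 3) * c (v 3) (v 1)
          + s (v 2) (v 3) * s (v 3) (v 1) = 0) \<and>
     (4 \<le> n \<longrightarrow>
        ct 2 = c (v 1) (v 2) \<and> st 2 = s (v 1) (v 2) \<and>
        ct n = c (v 1) (v n) \<and> st n = s (v 1) (v n) \<and>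
        (\<forall>i\<in>{2..n-1}.
           st i * c (v (i+1)) (v (i+1)) + s (v i) (v (i+1)) * ct (i+1)
             - st (i+1) * c (v i) (v (i+1)) = 0 \<and>
           ct i * c (v (i+1)) (v (i+1)) - c (v i) (v (i+1)) * ct (i+1)
             - st (i+1) * s (v i) (v (i+1)) = 0) \<and>
        (\<forall>i\<in>{2..n-1}. (ct i)\<^sup>2 + (st i)\<^sup>2 = c (v 1) (v 1) * c (v i) (v i)) \<and>
        (\<forall>k<n. (c (C ! k) (C ! succ_idx n k))\<^sup>2 + (s (C ! k) (C ! succ_idx n k))\<^sup>2
                 = c (C ! k) (C ! k) * c (C ! succ_idx n k) (C ! succ_idx n k))))"

definition cycle_angle_sum :: "('b \<Rightarrow> 'b \<Rightarrow> real) \<Rightarrow> ('b \<Rightarrow> 'b \<Rightarrow> real) \<Rightarrow> 'b list \<Rightarrow> real" where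
  "cycle_angle_sum c s C =
     (\<Sum>k<length C. atan2 (s (C ! k) (C ! succ_idx (length C) k)) (c (C ! k) (C ! succ_idx (length C) k)))"

end

theory Submission imports Defs begin

lemma prod_cis: fixes n :: nat shows "(\<Prod>k<n. cis (f k)) = cis (\<Sum>k<n. f k)"
  by (induction n) (simp_all add: cis_mult)

lemma argsum:
  fixes z :: "nat \<Rightarrow> complex"
  assumes nz: "\<And>k. k<n \<Longrightarrow> z k \<noteq> 0" and pr: "(\<Prod>k<n. z k) = complex_of_real r" and r: "r > 0"
  shows "\<exists>m::int. (\<Sum>k<n. Arg (z k)) = 2 * pi * of_int m"
proof -
  define S where "S = (\<Sum>k<n. Arg (z k))"
  define R where "R = (\<Prod>k<n. cmod (z k))"
  have R: "R > 0" unfolding R_def using nz by (intro prod_pos) simp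
  have "z k = complex_of_real (cmod (z k)) * cis (Arg (z k))" for k
    by (metis rcis_cmod_Arg rcis_def)
  hence "(\<Prod>k<n. z k) = (\<Prod>k<n. complex_of_real (cmod (z k)) * cis (Arg (z k)))" by simp
  also have "\<dots> = complex_of_real R * cis S"
    unfolding prod.distrib R_def S_def prod_cis by simp
  finally have eq: "complex_of_real R * cis S = complex_of_real r" using pr by simp
  have "R * cos S = r" using arg_cong[OF eq, of Re] by simp
  hence c: "cos S > 0" using R r by (metis zero_less_mult_pos)
  have "R * sin S = 0" using arg_cong[OF eq, of Im] by simp
  hence "sin S = 0" using R by simp
  hence "(cos S)^2 = 1" using sin_cos_squared_add[of S] by simp
  hence "cos S = 1" using c by (auto simp: power2_eq_1_iff)
  then obtain m::int where "S = real_of_int m * 2 * pi" using cos_one_2pi_int by metis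
  thus ?thesis unfolding S_def by (intro exI[of _ m]) simp
qed

lemma tri_alg:
  fixes c1 s1 c2 s2 c3 s3 d K :: real
  assumes E1: "s1* d + c2* s3 + s2* c3 = 0" and E2: "c1* d - c2* c3 + s2* s3 = 0" and K: "c1^2+s1^2 = K"
  shows "Complex c1 s1 * Complex c2 s2 * Complex c3 s3 = complex_of_real (d* K)"
proof -
  have A: "c2* c3 - s2* s3 = c1* d" using E2 by linarith
  have B: "c2* s3 + s2* c3 = - (s1* d)" using E1 by linarith
  have re: "(c1* c2 - s1* s2)* c3 - (c1* s2+s1* c2)* s3 = d* K"
  proof -
    have "(c1* c2 - s1* s2)* c3 - (c1* s2+s1* c2)* s3 = c1* (c2* c3 - s2* s3) - s1* (c2* s3 + s2* c3)"
      by (simp add: algebra_simps)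
    also have "\<dots> = d* (c1^2+s1^2)" unfolding A B by (simp add: algebra_simps power2_eq_square)
    finally show ?thesis using K by simp
  qed
  have im: "(c1* c2 - s1* s2)* s3 + (c1* s2+s1* c2)* c3 = 0"
  proof -
    have "(c1* c2 - s1* s2)* s3 + (c1* s2+s1* c2)* c3 = c1* (c2* s3 + s2* c3) + s1* (c2* c3 - s2* s3)"
      by (simp add: algebra_simps)
    also have "\<dots> = 0" unfolding A B by (simp add: algebra_simps)
    finally show ?thesis .
  qed
  show ?thesis using re im by (simp add: complex_eq_iff)
qed

lemma step_alg:
  fixes ct1 st1 ct2 st2 cc s d D :: real
  assumes E1: "st1* D + s* ct2 - st2* cc = 0" and E2: "ct1* D - cc* ct2 - st2* s = 0"
    and K: "cc^2+s^2 = d* D" and D: "D \<noteq> 0"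
  shows "Complex ct1 st1 * Complex cc s = complex_of_real d * Complex ct2 st2"
proof -
  have A: "ct1* D = cc* ct2 + st2* s" using E2 by linarith
  have B: "st1* D = st2* cc - s* ct2" using E1 by linarith
  have "D* (ct1* cc - st1* s) = D* (d* ct2)"
  proof -
    have "D* (ct1* cc - st1* s) = cc* (ct1* D) - s* (st1* D)" by (simp add: algebra_simps)
    also have "\<dots> = ct2* (cc^2+s^2)" unfolding A B by (simp add: algebra_simps power2_eq_square)
    finally show ?thesis using K by (simp add: algebra_simps)
  qed
  hence re: "ct1* cc - st1* s = d* ct2" using D by simp
  have "D* (ct1* s + st1* cc) = D* (d* st2)"
  proof -
    have "D* (ct1* s + st1* cc) = s* (ct1* D) + cc* (st1* D)" by (simp add: algebra_simps)
    also have "\<dots> = st2* (cc^2+s^2)" unfolding A B by (simp add: algebra_simps power2_eq_square)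
    finally show ?thesis using K by (simp add: algebra_simps)
  qed
  hence im: "ct1* s + st1* cc = d* st2" using D by simp
  show ?thesis using re im by (simp add: complex_eq_iff)
qed

lemma chain:
  fixes w u :: "nat \<Rightarrow> complex" and d :: "nat \<Rightarrow> real"
  assumes st: "\<And>i. 2 \<le> i \<Longrightarrow> i \<le> n - 1 \<Longrightarrow> u i * w (i-1) = complex_of_real (d (i-1)) * u (Suc i)"
    and b: "u 2 = w 0"
  shows "m + 2 \<le> n \<Longrightarrow> (\<Prod>k<m+1. w k) = u (m+2) * complex_of_real (\<Prod>j\<in>{1..m}. d j)"
proof (induction m)
  case 0
  then show ?case using b by (simp add: numeral_eq_Suc)
next
  case (Suc m)
  have "(\<Prod>k<Suc m+1. w k) = (\<Prod>k<m+1. w k) * w (m+1)" by simp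
  also have "\<dots> = u (m+2) * w (m+1) * complex_of_real (\<Prod>j\<in>{1..m}. d j)"
    using Suc by simp
  also have "u (m+2) * w (m+1) = complex_of_real (d (m+1)) * u (Suc m + 2)"
    using st[of "m+2"] Suc.prems by (simp add: numeral_eq_Suc)
  also have "{1..Suc m} = insert (Suc m) {1..m}" by auto
  ultimately show ?case by (simp add: mult_ac)
qed


lemma partb:
  assumes wf: "wf_network N" and alt: "ALT N pg qg c s" and cp: "coupling N c s"
    and cyc: "is_cycle N C" and cc: "cycle_constr c s C ct st"
  shows "\<exists>m::int. cycle_angle_sum c s C = 2 * pi * of_int m"
proof -
  define n where "n = length C"
  define w where "w k = Complex (c (C!k) (C!succ_idx n k)) (s (C!k) (C!succ_idx n k))" for k
  have pos: "c b b > 0" if b: "b \<in> buses N" for b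
  proof -
    have "0 < Vmin N b" using wf b unfolding wf_network_def by auto
    hence "0 < (Vmin N b)^2" by simp
    moreover have "(Vmin N b)^2 \<le> c b b" using alt b unfolding ALT_def by auto
    ultimately show ?thesis by linarith
  qed
  have n3: "3 \<le> n" and sub: "set C \<subseteq> buses N"
    and edge: "\<And>k. k < n \<Longrightarrow> {C!k, C!succ_idx n k} \<in> lines N"
    using cyc unfolding is_cycle_def n_def by auto
  have bus: "k < n \<Longrightarrow> C!k \<in> buses N" for k using sub n_def nth_mem by blast
  have sym: "{i,j} \<in> lines N \<Longrightarrow> c i j = c j i \<and> s i j = - s j i" for i j
    using alt unfolding ALT_def by blast
  have cpl: "{i,j} \<in> lines N \<Longrightarrow> (c i j)^2+(s i j)^2 = c i i * c j j" for i j
    using cp unfolding coupling_def by blast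
  have sucn: "succ_idx n k < n" for k unfolding succ_idx_def using n3 by simp
  have nz: "w k \<noteq> 0" if k: "k < n" for k
  proof
    assume "w k = 0"
    hence "c (C!k) (C!succ_idx n k) = 0" "s (C!k) (C!succ_idx n k) = 0"
      unfolding w_def by (simp_all add: complex_eq_iff)
    hence "c (C!k) (C!k) * c (C!succ_idx n k) (C!succ_idx n k) = 0"
      using cpl[OF edge[OF k]] by (simp del: mult_eq_0_iff)
    moreover have "c (C!k) (C!k) * c (C!succ_idx n k) (C!succ_idx n k) > 0"
      using pos[OF bus[OF k]] pos[OF bus[OF sucn]] by simp
    ultimately show False by linarith
  qed
  have sum: "cycle_angle_sum c s C = (\<Sum>k<n. Arg (w k))"
    by (simp add: cycle_angle_sum_def atan2_def w_def n_def)
  have "\<exists>r>0. (\<Prod>k<n. w k) = complex_of_real r"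
  proof (cases "n = 3")
    case True
    have C3: "length C = 3" using True n_def by simp
    have E1: "s (C!0) (C!1) * c (C!2) (C!2) + c (C!1) (C!2) * s (C!2) (C!0)
          + s (C!1) (C!2) * c (C!2) (C!0) = 0"
     and E2: "c (C!0) (C!1) * c (C!2) (C!2) - c (C!1) (C!2) * c (C!2) (C!0)
          + s (C!1) (C!2) * s (C!2) (C!0) = 0"
      using cc C3 unfolding cycle_constr_def Let_def by (simp_all add: numeral_eq_Suc)
    have s3: "succ_idx n 0 = 1" "succ_idx n 1 = 2" "succ_idx n 2 = 0"
      using True by (simp_all add: succ_idx_def)
    have l0: "{C!0, C!1} \<in> lines N" using edge[of 0] s3 n3 by simp
    have "(\<Prod>k<n. w k) = w 0 * w 1 * w 2" using True by (simp add: numeral_eq_Suc mult_ac)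
    also have "\<dots> = complex_of_real (c (C!2) (C!2) * (c (C!0) (C!0) * c (C!1) (C!1)))"
      unfolding w_def s3 by (rule tri_alg[OF E1 E2 cpl[OF l0]])
    finally show ?thesis
      using pos[OF bus, of 0] pos[OF bus, of 1] pos[OF bus, of 2] True
      by (intro exI[of _ "c (C!2) (C!2) * (c (C!0) (C!0) * c (C!1) (C!1))"]) simp
  next
    case False
    hence n4: "4 \<le> n" using n3 by simp
    have cc': "ct 2 = c (C!0) (C!1) \<and> st 2 = s (C!0) (C!1) \<and>
        ct n = c (C!0) (C!(n-1)) \<and> st n = s (C!0) (C!(n-1)) \<and>
        (\<forall>i\<in>{2..n-1}.
           st i * c (C!i) (C!i) + s (C!(i-1)) (C!i) * ct (i+1)
             - st (i+1) * c (C!(i-1)) (C!i) = 0 \<and>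
           ct i * c (C!i) (C!i) - c (C!(i-1)) (C!i) * ct (i+1)
             - st (i+1) * s (C!(i-1)) (C!i) = 0)"
      using cc n4 unfolding cycle_constr_def Let_def n_def by simp
    define u where "u i = Complex (ct i) (st i)" for i
    define d where "d j = c (C!j) (C!j)" for j
    have st: "u i * w (i-1) = complex_of_real (d (i-1)) * u (Suc i)"
      if i: "2 \<le> i" "i \<le> n - 1" for i
    proof -
      have si: "succ_idx n (i-1) = i" using i n4 by (simp add: succ_idx_def)
      have l: "{C!(i-1), C!i} \<in> lines N" using edge[of "i-1"] si i by simp
      have ci: "c (C!i) (C!i) \<noteq> 0" using pos[OF bus, of i] i n4 by fastforce
      have "i \<in> {2..n-1}" using i by simp
      with cc' have E: "st i * c (C!i) (C!i) + s (C!(i-1)) (C!i) * ct (i+1)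
             - st (i+1) * c (C!(i-1)) (C!i) = 0"
         "ct i * c (C!i) (C!i) - c (C!(i-1)) (C!i) * ct (i+1)
             - st (i+1) * s (C!(i-1)) (C!i) = 0" by blast+
      show ?thesis unfolding u_def w_def si d_def
        using step_alg[OF E(1) E(2) cpl[OF l] ci] by simp
    qed
    have b: "u 2 = w 0" using cc' n4 by (simp add: u_def w_def succ_idx_def)
    have ch: "(\<Prod>k<n-2+1. w k) = u (n-2+2) * complex_of_real (\<Prod>j\<in>{1..n-2}. d j)"
      using chain[of n u w d, OF st b, of "n-2"] n4 by simp
    have nn: "n-2+1 = n-1" "n-2+2 = n" using n4 by simp_all
    have "(\<Prod>k<n. w k) = (\<Prod>k<n-1. w k) * w (n-1)"
      using n4 prod.lessThan_Suc[of w "n-1"] by (simp add: Suc_diff_Suc)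
    also have "\<dots> = u n * w (n-1) * complex_of_real (\<Prod>j\<in>{1..n-2}. d j)"
      using ch[unfolded nn] by (simp only: mult_ac)
    finally have P: "(\<Prod>k<n. w k) = u n * w (n-1) * complex_of_real (\<Prod>j\<in>{1..n-2}. d j)" .
    have sl: "succ_idx n (n-1) = 0" using n4 by (simp add: succ_idx_def)
    have le: "{C!(n-1), C!0} \<in> lines N" using edge[of "n-1"] sl n4 by simp
    hence le': "{C!0, C!(n-1)} \<in> lines N" by (simp add: insert_commute)
    define a where "a = c (C!(n-1)) (C!0)"
    define bb where "bb = s (C!(n-1)) (C!0)"
    have un: "u n = Complex a (- bb)" using cc' sym[OF le'] by (simp add: u_def a_def bb_def)
    have wn: "w (n-1) = Complex a bb" unfolding w_def sl a_def bb_def ..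
    have "u n * w (n-1) = complex_of_real (a^2+bb^2)"
      unfolding un wn by (simp add: complex_eq_iff power2_eq_square algebra_simps)
    moreover have "a^2+bb^2 > 0" unfolding a_def bb_def cpl[OF le]
      using pos[OF bus, of "n-1"] pos[OF bus, of 0] n4 by simp
    moreover have "(\<Prod>j\<in>{1..n-2}. d j) > 0"
      by (rule prod_pos) (use pos bus n4 in \<open>auto simp: d_def\<close>)
    ultimately show ?thesis using P by (intro exI[of _ "(a^2+bb^2) * (\<Prod>j\<in>{1..n-2}. d j)"]) simp
  qed
  then obtain r where "r > 0" "(\<Prod>k<n. w k) = complex_of_real r" by blast
  from argsum[OF nz this(2) this(1)] show ?thesis unfolding sum .
qed


lemma feas_xy:
  assumes wf: "wf_network N" and orn: "orientation N Or" and fe: "OPF_feasible N Or pg qg c s \<theta>"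
  shows "\<exists>x y. (\<forall>i j. {i,j} \<in> lines N \<longrightarrow> c i j = x i * x j + y i * y j \<and> s i j = x i * y j - y i * x j)
     \<and> (\<forall>i\<in>buses N. c i i = (x i)^2 + (y i)^2)"
proof -
  have alt: "ALT N pg qg c s" and cp: "coupling N c s"
    and ang: "\<And>i j. (i,j) \<in> Or \<Longrightarrow> \<theta> j - \<theta> i = atan2 (s i j) (c i j)"
    using fe unfolding OPF_feasible_def by auto
  have nonneg: "c b b \<ge> 0" if b: "b \<in> buses N" for b
  proof -
    have "(Vmin N b)^2 \<le> c b b" using alt b unfolding ALT_def by auto
    moreover have "0 \<le> (Vmin N b)^2" by simp
    ultimately show ?thesis by linarith
  qed
  have sym: "{i,j} \<in> lines N \<Longrightarrow> c i j = c j i \<and> s i j = - s j i" for i j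
    using alt unfolding ALT_def by blast
  have cpl: "{i,j} \<in> lines N \<Longrightarrow> (c i j)^2+(s i j)^2 = c i i * c j j" for i j
    using cp unfolding coupling_def by blast
  define V where "V i = sqrt (c i i)" for i
  have orl: "(i,j) \<in> Or \<Longrightarrow> {i,j} \<in> lines N" for i j using orn unfolding orientation_def by auto
  have polar: "c i j = V i * V j * cos (\<theta> j - \<theta> i) \<and> s i j = V i * V j * sin (\<theta> j - \<theta> i)"
    if ij: "(i,j) \<in> Or" for i j
  proof -
    define z where "z = Complex (c i j) (s i j)"
    have A: "Arg z = \<theta> j - \<theta> i" using ang[OF ij] by (simp add: atan2_def z_def)
    have M: "cmod z = V i * V j"
      by (simp add: z_def cmod_def V_def cpl[OF orl[OF ij]] real_sqrt_mult)
    have "z = rcis (cmod z) (Arg z)" by (simp add: rcis_cmod_Arg)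
    hence "Re z = cmod z * cos (Arg z)" "Im z = cmod z * sin (Arg z)"
      by (metis Re_rcis, metis Im_rcis)
    thus ?thesis unfolding A M by (simp add: z_def)
  qed
  have polar2: "c i j = V i * V j * cos (\<theta> j - \<theta> i) \<and> s i j = V i * V j * sin (\<theta> j - \<theta> i)"
    if l: "{i,j} \<in> lines N" for i j
  proof (cases "(i,j) \<in> Or")
    case True then show ?thesis using polar by blast
  next
    case False
    hence "(j,i) \<in> Or" using orn l unfolding orientation_def by blast
    from polar[OF this] have "c j i = V j * V i * cos (\<theta> i - \<theta> j)" "s j i = V j * V i * sin (\<theta> i - \<theta> j)"
      by auto
    moreover have "cos (\<theta> i - \<theta> j) = cos (\<theta> j - \<theta> i)" "sin (\<theta> i - \<theta> j) = - sin (\<theta> j - \<theta> i)"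
      by (metis cos_minus minus_diff_eq, metis sin_minus minus_diff_eq)
    ultimately show ?thesis using sym[OF l] by simp
  qed
  define x where "x i = V i * cos (\<theta> i)" for i
  define y where "y i = V i * sin (\<theta> i)" for i
  have "c i j = x i * x j + y i * y j \<and> s i j = x i * y j - y i * x j" if l: "{i,j} \<in> lines N" for i j
    using polar2[OF l] unfolding x_def y_def cos_diff sin_diff by (simp add: algebra_simps)
  moreover have "c i i = (x i)^2 + (y i)^2" if b: "i \<in> buses N" for i
  proof -
    have "(x i)^2 + (y i)^2 = (V i)^2 * ((sin (\<theta> i))^2 + (cos (\<theta> i))^2)"
      unfolding x_def y_def power_mult_distrib distrib_left[symmetric] by (simp add: add.commute)
    also have "\<dots> = c i i" using nonneg[OF b] by (simp add: V_def)
    finally show ?thesis by simp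
  qed
  ultimately show ?thesis by blast
qed


lemma parta:
  assumes L: "\<And>i j. {i,j} \<in> lines N \<Longrightarrow> c i j = x i * x j + y i * y j \<and> s i j = x i * y j - y i * x j"
    and B: "\<And>i. i \<in> buses N \<Longrightarrow> c i i = (x i)^2 + (y i)^2"
    and cp: "coupling N c s" and cyc: "is_cycle N C"
  shows "\<exists>ct st. cycle_constr c s C ct st"
proof -
  have Lc: "{i,j} \<in> lines N \<Longrightarrow> c i j = x i * x j + y i * y j" for i j using L by blast
  have Ls: "{i,j} \<in> lines N \<Longrightarrow> s i j = x i * y j - y i * x j" for i j using L by blast
  define n where "n = length C"
  have n3: "3 \<le> n" and sub: "set C \<subseteq> buses N"
    and edge: "\<And>k. k < n \<Longrightarrow> {C!k, C!succ_idx n k} \<in> lines N"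
    using cyc unfolding is_cycle_def n_def by auto
  have bus: "k < n \<Longrightarrow> C!k \<in> buses N" for k using sub n_def nth_mem by blast
  have cpl: "\<forall>k<n. (c (C ! k) (C ! succ_idx n k))\<^sup>2 + (s (C ! k) (C ! succ_idx n k))\<^sup>2
                 = c (C ! k) (C ! k) * c (C ! succ_idx n k) (C ! succ_idx n k)"
    using cp edge unfolding coupling_def by blast
  have ed: "{C!(k-1), C!k} \<in> lines N" if "1 \<le> k" "k < n" for k
    using edge[of "k-1"] that by (simp add: succ_idx_def)
  have el: "{C!(n-1), C!0} \<in> lines N" using edge[of "n-1"] n3 by (simp add: succ_idx_def)
  show ?thesis
  proof (cases "n = 3")
    case True
    have l01: "{C!0, C!1} \<in> lines N" and l12: "{C!1, C!2} \<in> lines N"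
      using ed[of 1] ed[of 2] True by simp_all
    have l20: "{C!2, C!0} \<in> lines N" using el True by simp
    have b2: "C!2 \<in> buses N" using bus True by simp
    have E1: "s (C!0) (C!1) * c (C!2) (C!2) + c (C!1) (C!2) * s (C!2) (C!0)
          + s (C!1) (C!2) * c (C!2) (C!0) = 0"
      unfolding Lc[OF l01] Ls[OF l01] Lc[OF l12] Ls[OF l12] Lc[OF l20] Ls[OF l20] B[OF b2] by (simp add: algebra_simps power2_eq_square)
    have E2: "c (C!0) (C!1) * c (C!2) (C!2) - c (C!1) (C!2) * c (C!2) (C!0)
          + s (C!1) (C!2) * s (C!2) (C!0) = 0"
      unfolding Lc[OF l01] Ls[OF l01] Lc[OF l12] Ls[OF l12] Lc[OF l20] Ls[OF l20] B[OF b2] by (simp add: algebra_simps power2_eq_square)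
    show ?thesis using E1 E2 True unfolding cycle_constr_def Let_def n_def
      by (simp add: numeral_eq_Suc)
  next
    case False
    hence n4: "4 \<le> n" using n3 by simp
    define ct where "ct i = x (C!0) * x (C!(i-1)) + y (C!0) * y (C!(i-1))" for i
    define st where "st i = x (C!0) * y (C!(i-1)) - y (C!0) * x (C!(i-1))" for i
    have l01: "{C!0, C!1} \<in> lines N" using ed[of 1] n4 by simp
    have l0n: "{C!0, C!(n-1)} \<in> lines N" using el by (simp add: insert_commute)
    have b0: "C!0 \<in> buses N" using bus n4 by simp
    have A1: "ct 2 = c (C!0) (C!1) \<and> st 2 = s (C!0) (C!1) \<and>
        ct n = c (C!0) (C!(n-1)) \<and> st n = s (C!0) (C!(n-1))"
      unfolding Lc[OF l01] Ls[OF l01] Lc[OF l0n] Ls[OF l0n] ct_def st_def by (simp add: numeral_eq_Suc)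
    have A2: "st i * c (C!i) (C!i) + s (C!(i-1)) (C!i) * ct (i+1)
             - st (i+1) * c (C!(i-1)) (C!i) = 0 \<and>
           ct i * c (C!i) (C!i) - c (C!(i-1)) (C!i) * ct (i+1)
             - st (i+1) * s (C!(i-1)) (C!i) = 0" if i: "i \<in> {2..n-1}" for i
    proof -
      have l: "{C!(i-1), C!i} \<in> lines N" using ed[of i] i n4 by fastforce
      have b: "C!i \<in> buses N" using bus[of i] i n4 by fastforce
      show ?thesis unfolding Lc[OF l] Ls[OF l] B[OF b] ct_def st_def
        by (simp add: algebra_simps power2_eq_square)
    qed
    have A3: "(ct i)^2 + (st i)^2 = c (C!0) (C!0) * c (C!(i-1)) (C!(i-1))" if i: "i \<in> {2..n-1}" for i
    proof -
      have b: "C!(i-1) \<in> buses N" using bus[of "i-1"] i n4 by fastforce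
      show ?thesis unfolding B[OF b] B[OF b0] ct_def st_def
        by (simp add: algebra_simps power2_eq_square)
    qed
    have "cycle_constr c s C ct st"
      unfolding cycle_constr_def Let_def n_def[symmetric]
      using A1 A2 A3 cpl n4 by simp
    thus ?thesis by blast
  qed
qed


theorem proposition7:
  fixes N :: "'b network" and \<C> :: "'b list set"
  assumes "wf_network N" and "cycle_basis N \<C>"
  shows "(\<forall>Or pg qg c s \<theta>. orientation N Or \<and> OPF_feasible N Or pg qg c s \<theta> \<longrightarrow>
            (\<forall>C\<in>\<C>. \<exists>ct st. cycle_constr c s C ct st))
       \<and> (\<forall>pg qg c s. ALT N pg qg c s \<and> coupling N c s \<and>
            (\<forall>C\<in>\<C>. \<exists>ct st. cycle_constr c s C ct st) \<longrightarrow>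
            (\<forall>C\<in>\<C>. \<exists>k::int. cycle_angle_sum c s C = 2 * pi * of_int k))"
proof (intro conjI allI impI ballI)
  have cyc: "C \<in> \<C> \<Longrightarrow> is_cycle N C" for C using assms(2) unfolding cycle_basis_def by blast
  fix Or pg qg c s \<theta> C
  assume h: "orientation N Or \<and> OPF_feasible N Or pg qg c s \<theta>" and C: "C \<in> \<C>"
  from feas_xy[OF assms(1)] h obtain x y where
    xy: "\<forall>i j. {i,j} \<in> lines N \<longrightarrow> c i j = x i * x j + y i * y j \<and> s i j = x i * y j - y i * x j"
        "\<forall>i\<in>buses N. c i i = (x i)^2 + (y i)^2" by blast
  have "coupling N c s" using h unfolding OPF_feasible_def by blast
  then show "\<exists>ct st. cycle_constr c s C ct st"
    using parta[of N c x y s C] xy cyc[OF C] by blast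
next
  fix pg qg c s C
  assume h: "ALT N pg qg c s \<and> coupling N c s \<and> (\<forall>C\<in>\<C>. \<exists>ct st. cycle_constr c s C ct st)"
    and C: "C \<in> \<C>"
  have cyc: "is_cycle N C" using assms(2) C unfolding cycle_basis_def by blast
  from h C obtain ct st where "cycle_constr c s C ct st" by blast
  with partb[OF assms(1) _ _ cyc] h show "\<exists>k::int. cycle_angle_sum c s C = 2 * pi * of_int k" by blast
qed

end
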